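(* Assume the Erdős girth conjecture: for every integer $k\ge1$ there are infinitely many $\eta$ for which there exists a graph on $\eta$ vertices with girth $2k+2$ and $\Omega(\eta^{1+1/k})$ edges. Then for every integer $k\ge1$ there are infinitely many $n$ for which there exist an undirected graph $G'$ on $n$ vertices with nonnegative edge weights and a vertex $s$ such that every $f$-EFT $\sigma$-ASPT of $G'$ rooted at $s$ with $f\ge\log n$ and $\sigma<\frac{3k+1}{k+1}$ has $\Omega(n^{1+1/k})$ edges.
   Context: For a weighted graph $G'=(V,E,w)$ with source $s$, an $f$-EFT $\sigma$-ASPT of $G'$ rooted at $s$ is a spanning subgraph $H$ of $G'$ such that for every $F\subseteq E$ with $|F|\le f$ and every vertex $t$, $d_{H-F}(t)\le\sigma\,d_{G'-F}(t)$, where $X-F$ is $X$ with the edges of $F$ removed and $d_X(t)$ is the shortest-path distance from $s$ to $t$ in $X$. Logarithms are base $2$. *)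

theory Defs
  imports Complex_Main "HOL-Library.Extended_Real" "HOL-Library.Extended_Nat"
begin

definition is_graph :: "nat \<Rightarrow> nat set set \<Rightarrow> bool" where
  "is_graph n E \<longleftrightarrow> E \<subseteq> {{u, v} | u v. u \<noteq> v \<and> u < n \<and> v < n}"

definition is_walk :: "nat set set \<Rightarrow> nat list \<Rightarrow> bool" where
  "is_walk E p \<longleftrightarrow> p \<noteq> [] \<and> (\<forall>i < length p - 1. {p ! i, p ! (i + 1)} \<in> E)"

definition walk_weight :: "(nat set \<Rightarrow> real) \<Rightarrow> nat list \<Rightarrow> real" where
  "walk_weight w p = (\<Sum>i < length p - 1. w {p ! i, p ! (i + 1)})"

definition dist :: "nat set set \<Rightarrow> (nat set \<Rightarrow> real) \<Rightarrow> nat \<Rightarrow> nat \<Rightarrow> ereal" where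
  "dist E w s t = (INF p \<in> {p. is_walk E p \<and> hd p = s \<and> last p = t}. ereal (walk_weight w p))"

definition is_cycle :: "nat set set \<Rightarrow> nat list \<Rightarrow> bool" where
  "is_cycle E c \<longleftrightarrow> 3 \<le> length c \<and> distinct c \<and>
     (\<forall>i < length c. {c ! i, c ! ((i + 1) mod length c)} \<in> E)"

definition girth :: "nat set set \<Rightarrow> enat" where
  "girth E = (INF c \<in> {c. is_cycle E c}. enat (length c))"

definition is_EFT_ASPT ::
  "nat \<Rightarrow> nat set set \<Rightarrow> (nat set \<Rightarrow> real) \<Rightarrow> nat \<Rightarrow> nat \<Rightarrow> real \<Rightarrow> nat set set \<Rightarrow> bool" where
  "is_EFT_ASPT n E w s f \<sigma> H \<longleftrightarrow> H \<subseteq> E \<and>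
     (\<forall>F. F \<subseteq> E \<and> card F \<le> f \<longrightarrow>
        (\<forall>t < n. dist (H - F) w s t \<le> ereal \<sigma> * dist (E - F) w s t))"

end

theory Submission
  imports Defs
begin


lemma walk_snoc:
  assumes "q \<noteq> []"
  shows "is_walk E (q @ [z]) \<longleftrightarrow> is_walk E q \<and> {last q, z} \<in> E"
proof -
  have len: "length (q @ [z]) - 1 = length q" by simp
  have A: "(\<forall>i < length q. {(q@[z]) ! i, (q@[z]) ! (i + 1)} \<in> E) \<longleftrightarrow>
        (\<forall>i < length q - 1. {q ! i, q ! (i + 1)} \<in> E) \<and> {last q, z} \<in> E"
  proof
    assume H: "\<forall>i < length q. {(q@[z]) ! i, (q@[z]) ! (i + 1)} \<in> E"
    have "\<forall>i < length q - 1. {q ! i, q ! (i + 1)} \<in> E"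
    proof (intro allI impI)
      fix i assume "i < length q - 1"
      then have "i < length q" "Suc i < length q" by auto
      with H[rule_format, of i] show "{q ! i, q ! (i + 1)} \<in> E" by (simp add: nth_append)
    qed
    moreover have "{last q, z} \<in> E"
      using H[rule_format, of "length q - 1"] assms by (simp add: nth_append last_conv_nth)
    ultimately show "(\<forall>i < length q - 1. {q ! i, q ! (i + 1)} \<in> E) \<and> {last q, z} \<in> E" by blast
  next
    assume H: "(\<forall>i < length q - 1. {q ! i, q ! (i + 1)} \<in> E) \<and> {last q, z} \<in> E"
    show "\<forall>i < length q. {(q@[z]) ! i, (q@[z]) ! (i + 1)} \<in> E"
    proof (intro allI impI)
      fix i assume i: "i < length q"
      show "{(q@[z]) ! i, (q@[z]) ! (i + 1)} \<in> E"
      proof (cases "i = length q - 1")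
        case True then show ?thesis using H assms i by (simp add: nth_append last_conv_nth)
      next
        case False then have "Suc i < length q" using i by arith
        then show ?thesis using H assms i False by (simp add: nth_append)
      qed
    qed
  qed
  show ?thesis unfolding is_walk_def len using A assms by simp
qed

lemma weight_snoc:
  assumes "q \<noteq> []"
  shows "walk_weight w (q @ [z]) = walk_weight w q + w {last q, z}"
proof -
  have l: "length q = Suc (length q - 1)" using assms by simp
  have "walk_weight w (q @ [z]) = (\<Sum>i < length q. w {(q@[z]) ! i, (q@[z]) ! (i + 1)})"
    unfolding walk_weight_def by simp
  also have "\<dots> = (\<Sum>i < length q - 1. w {(q@[z]) ! i, (q@[z]) ! (i + 1)}) + w {last q, z}"
    apply (subst l) apply (subst sum.lessThan_Suc)
    using assms by (simp add: nth_append last_conv_nth)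
  also have "(\<Sum>i < length q - 1. w {(q@[z]) ! i, (q@[z]) ! (i + 1)}) = walk_weight w q"
    unfolding walk_weight_def by (rule sum.cong) (auto simp: nth_append)
  finally show ?thesis .
qed

lemma walk_take:
  assumes "is_walk E q" "1 \<le> m"
  shows "is_walk E (take m q)"
  using assms unfolding is_walk_def by (auto simp: nth_take)

lemma walk_mono: "is_walk E1 p \<Longrightarrow> E1 \<subseteq> E2 \<Longrightarrow> is_walk E2 p"
  unfolding is_walk_def by blast

lemma walk_to_path:
  "is_walk E p \<Longrightarrow> \<exists>q. is_walk E q \<and> hd q = hd p \<and> last q = last p \<and> distinct q \<and> length q \<le> length p"
proof (induction p rule: rev_induct)
  case Nil then show ?case by (simp add: is_walk_def)
next
  case (snoc z p)
  show ?case
  proof (cases "p = []")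
    case True then show ?thesis using snoc.prems by (intro exI[of _ "[z]"]) (auto simp: is_walk_def)
  next
    case False
    with snoc.prems walk_snoc have wp: "is_walk E p" and ed: "{last p, z} \<in> E" by auto
    from snoc.IH[OF wp] obtain q where q: "is_walk E q" "hd q = hd p" "last q = last p" "distinct q"
      "length q \<le> length p" by blast
    have qne: "q \<noteq> []" using q(1) by (simp add: is_walk_def)
    show ?thesis
    proof (cases "z \<in> set q")
      case True
      then obtain i where i: "i < length q" "q ! i = z" by (auto simp: in_set_conv_nth)
      have h1: "hd (take (Suc i) q) = hd q" using qne by simp
      have h2: "last (take (Suc i) q) = q ! i" using i
        by (simp add: take_Suc_conv_app_nth)
      have h3: "hd (p @ [z]) = hd p" "last (p @ [z]) = z" using \<open>p \<noteq> []\<close> by auto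
      show ?thesis
        apply (intro exI[of _ "take (Suc i) q"])
        using q i walk_take[OF q(1), of "Suc i"] h1 h2 h3 by auto
    next
      case False
      show ?thesis
        apply (intro exI[of _ "q @ [z]"])
        using q False qne \<open>p \<noteq> []\<close> walk_snoc[OF qne, of E z] ed by auto
    qed
  qed
qed

lemma walk_pot:
  assumes "is_walk E p" "\<forall>u v. {u,v} \<in> E \<longrightarrow> \<phi> v - \<phi> u \<le> w {u,v}"
  shows "\<phi> (last p) - \<phi> (hd p) \<le> walk_weight w p"
proof -
  have ne: "p \<noteq> []" using assms(1) by (simp add: is_walk_def)
  have "\<phi> (last p) - \<phi> (hd p) = (\<Sum>i<length p - 1. \<phi> (p ! Suc i) - \<phi> (p ! i))"
    using sum_lessThan_telescope[of "\<lambda>i. \<phi> (p ! i)" "length p - 1"] ne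
    by (simp add: last_conv_nth hd_conv_nth)
  also have "\<dots> \<le> walk_weight w p" unfolding walk_weight_def
    apply (rule sum_mono) using assms unfolding is_walk_def by auto
  finally show ?thesis .
qed

lemma dist_le: "is_walk E p \<Longrightarrow> hd p = s \<Longrightarrow> last p = t \<Longrightarrow> dist E w s t \<le> ereal (walk_weight w p)"
  unfolding dist_def by (rule INF_lower) auto

lemma dist_ge: "(\<And>p. is_walk E p \<Longrightarrow> hd p = s \<Longrightarrow> last p = t \<Longrightarrow> r \<le> walk_weight w p) \<Longrightarrow> ereal r \<le> dist E w s t"
  unfolding dist_def by (rule INF_greatest) auto

lemma no_short:
  assumes "is_graph \<eta> E0" "girth E0 = enat (2*k+2)" "{x,y} \<in> E0"
    "is_walk (E0 - {{x,y}}) p" "hd p = x" "last p = y"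
  shows "length p \<ge> 2*k+2"
proof -
  from assms(1,3) have xy: "x \<noteq> y" unfolding is_graph_def by (auto simp: doubleton_eq_iff)
  from walk_to_path[OF assms(4)] obtain q where q: "is_walk (E0 - {{x,y}}) q" "hd q = x" "last q = y"
    "distinct q" "length q \<le> length p" using assms(5,6) by auto
  have qne: "q \<noteq> []" using q(1) by (simp add: is_walk_def)
  have l1: "length q \<noteq> 1" using q(2,3) xy qne by (cases q) auto
  have l2: "length q \<noteq> 2"
  proof
    assume "length q = 2"
    then have "q = [q!0, q!1]" by (cases q; cases "tl q") auto
    moreover have "{q!0, q!(0+1)} \<in> E0 - {{x,y}}" using q(1) \<open>length q = 2\<close> unfolding is_walk_def by auto
    ultimately show False using q(2,3) by (metis DiffD2 One_nat_def add_0 hd_conv_nth last_conv_nth list.distinct(1) diff_Suc_1 singletonI \<open>length q = 2\<close> numeral_2_eq_2)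
  qed
  have cyc: "is_cycle E0 q" unfolding is_cycle_def
  proof (intro conjI allI impI)
    show "3 \<le> length q" using l1 l2 qne by (cases "length q") auto
    show "distinct q" by fact
    fix i assume i: "i < length q"
    show "{q ! i, q ! ((i + 1) mod length q)} \<in> E0"
    proof (cases "i = length q - 1")
      case True
      then have "(i+1) mod length q = 0" using qne by simp
      then show ?thesis using True q(2,3) qne assms(3)
        by (simp add: hd_conv_nth last_conv_nth insert_commute)
    next
      case False
      then have "(i+1) mod length q = i + 1" using i by simp
      then show ?thesis using q(1) False i unfolding is_walk_def by auto
    qed
  qed
  have "girth E0 \<le> enat (length q)" unfolding girth_def by (rule INF_lower) (use cyc in auto)
  then show ?thesis using assms(2) q(5) by simp
qed




lemma div_pow_dec:
  fixes m :: nat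
  assumes "1 \<le> m div 2^i" "i < j"
  shows "m div 2^j < m div 2^i"
proof -
  have "m div 2^j = m div 2^i div 2^(j-i)"
    using assms(2) by (metis div_mult2_eq le_add_diff_inverse less_imp_le power_add)
  also have "\<dots> < m div 2^i"
    using assms one_less_power[of "2::nat" "j-i"] by (intro div_less_dividend) auto
  finally show ?thesis .
qed

lemma div_pow_inj:
  fixes m :: nat
  assumes "m div 2^i = m div 2^j" "1 \<le> m div 2^i"
  shows "i = j"
proof (rule ccontr)
  assume "i \<noteq> j"
  then consider "i < j" | "j < i" by arith
  then show False
  proof cases
    case 1 then show ?thesis using div_pow_dec[OF assms(2) 1] assms(1) by simp
  next
    case 2 then show ?thesis using div_pow_dec[of m j i] assms by simp
  qed
qed

definition sib :: "nat \<Rightarrow> nat" where "sib d = (if even d then d+1 else d-1)"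

lemma sib_div: "d \<ge> 1 \<Longrightarrow> sib d div 2 = d div 2" unfolding sib_def by auto presburger+
lemma sib_neq: "d \<ge> 1 \<Longrightarrow> sib d \<noteq> d" unfolding sib_def by auto
lemma sib_eq: "c div 2 = d div 2 \<Longrightarrow> c \<noteq> d \<Longrightarrow> c = sib d" unfolding sib_def by presburger

lemma sib_range: "2 \<le> d \<Longrightarrow> d < 2*M \<Longrightarrow> 2 \<le> sib d \<and> sib d < 2*M"
  unfolding sib_def by presburger

locale constr =
  fixes k \<eta> L :: nat and E0 :: "nat set set"
  assumes k1: "k \<ge> 1" and gr: "is_graph \<eta> E0" and gir: "girth E0 = enat (2*k+2)"
  and etaN: "\<eta> \<le> 2^L" and L1: "L \<ge> 1"
begin

definition N :: nat where "N = 2^L"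
definition T where "T = {{c div 2, c} | c. 2 \<le> c \<and> c < 2*N}"
definition Gm where "Gm = (\<lambda>e. (\<lambda>v. N + v) ` e) ` E0"
definition E where "E = T \<union> Gm"
definition w :: "nat set \<Rightarrow> real" where
  "w e = (if e \<in> Gm then 1 else if (\<exists>h\<in>e. N \<le> h) then real k else 0)"

lemma N2: "N \<ge> 2" unfolding N_def using L1
  by (metis One_nat_def Suc_1 Suc_le_eq le_less_trans lessI one_less_power order_le_less)

lemma Gm_elem: "e \<in> Gm \<Longrightarrow> \<exists>p q. e = {N+p, N+q} \<and> {p,q} \<in> E0 \<and> p \<noteq> q \<and> p < \<eta> \<and> q < \<eta>"
proof -
  assume "e \<in> Gm"
  then obtain e0 where e0: "e0 \<in> E0" "e = (\<lambda>v. N + v) ` e0" unfolding Gm_def by auto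
  with gr obtain p q where "e0 = {p,q}" "p \<noteq> q" "p < \<eta>" "q < \<eta>" unfolding is_graph_def by blast
  then show ?thesis using e0 by auto
qed

lemma Gm_ge: "e \<in> Gm \<Longrightarrow> h \<in> e \<Longrightarrow> N \<le> h"
  unfolding Gm_def by auto

lemma T_notGm: "2 \<le> c \<Longrightarrow> c < 2*N \<Longrightarrow> {c div 2, c} \<notin> Gm"
  using Gm_ge[of "{c div 2, c}" "c div 2"] by auto

lemma w_T: "2 \<le> c \<Longrightarrow> c < 2*N \<Longrightarrow> w {c div 2, c} = (if N \<le> c then real k else 0)"
  unfolding w_def using T_notGm by auto

lemma w_Gm: "e \<in> Gm \<Longrightarrow> w e = 1" unfolding w_def by simp

lemma graph: "is_graph (2*N) E"
proof -
  have "T \<subseteq> {{u, v} | u v. u \<noteq> v \<and> u < 2*N \<and> v < 2*N}"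
    unfolding T_def by fastforce
  moreover have "Gm \<subseteq> {{u, v} | u v. u \<noteq> v \<and> u < 2*N \<and> v < 2*N}"
  proof
    fix e assume "e \<in> Gm"
    then obtain p q where "e = {N+p, N+q}" "p \<noteq> q" "p < \<eta>" "q < \<eta>" using Gm_elem by blast
    then show "e \<in> {{u, v} | u v. u \<noteq> v \<and> u < 2*N \<and> v < 2*N}" using etaN unfolding N_def by force
  qed
  ultimately show ?thesis unfolding is_graph_def E_def by blast
qed

lemma finE: "finite E"
proof -
  have "E \<subseteq> Pow {..<2*N}" using graph unfolding is_graph_def by auto
  then show ?thesis by (rule finite_subset) auto
qed

lemma card_Gm: "card Gm = card E0"
  unfolding Gm_def
  by (rule card_image) (simp add: inj_on_def inj_image_eq_iff)

end




locale constr2 = constr +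
  fixes x y :: nat
  assumes xy: "{x,y} \<in> E0"
begin

definition a where "a = N + x"
definition b where "b = N + y"
definition Anc where "Anc = {h. 1 \<le> h \<and> (\<exists>i. h = a div 2^i)}"
definition F where "F = (\<lambda>i. {(a div 2^i) div 2, sib (a div 2^i)}) ` {..<L}"
definition E0' where "E0' = E0 - {{x,y}}"
definition reach where "reach j z \<longleftrightarrow> (\<exists>p. is_walk E0' p \<and> hd p = x \<and> last p = z \<and> length p = Suc j)"
definition psi where "psi z = (if z = x then 0 else (LEAST j. j = 2*k+1 \<or> (1 \<le> j \<and> reach j z)))"
definition phi :: "nat \<Rightarrow> real" where
  "phi h = (if N \<le> h then real k + real (psi (h - N)) else if h \<in> Anc then 0 else real (2*k+1))"

lemma xy_facts: "x \<noteq> y" "x < \<eta>" "y < \<eta>"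
  using gr xy unfolding is_graph_def by (auto simp: doubleton_eq_iff)

lemma a_range: "N \<le> a" "a < 2*N" "N \<le> b" "b < 2*N" "a \<noteq> b"
  using xy_facts etaN unfolding a_def b_def N_def by auto

lemma div2S: "m div 2^(Suc i) = (m::nat) div 2^i div 2" by (metis div_mult2_eq power_Suc2)

lemma a_L: "a div 2^L = 1"
proof -
  have xN: "x < N" using xy_facts etaN unfolding N_def by simp
  have "a div N = (x + N) div N" unfolding a_def by (simp add: add.commute)
  also have "\<dots> = x div N + 1" using N2 by (simp add: div_add_self2)
  also have "\<dots> = 1" using xN by simp
  finally have "a div N = 1" .
  then show ?thesis unfolding N_def .
qed

lemma a_big: "i > L \<Longrightarrow> a div 2^i = 0"
proof -
  assume "i > L"
  then have "2*N \<le> 2^i" unfolding N_def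
    by (metis power_Suc power_increasing_iff Suc_leI one_less_numeral_iff semiring_norm(76))
  then show ?thesis using a_range by simp
qed

lemma anc_pos: "i \<le> L \<Longrightarrow> 1 \<le> a div 2^i"
proof -
  assume "i \<le> L"
  then have "a div 2^L \<le> a div 2^i" by (intro div_le_mono2) (auto intro: power_increasing)
  then show ?thesis using a_L by simp
qed

lemma anc_ge2: "i < L \<Longrightarrow> 2 \<le> a div 2^i"
  using div_pow_dec[of a i L] anc_pos[of i] a_L by simp

lemma anc_lt: "1 \<le> i \<Longrightarrow> a div 2^i < N"
proof -
  assume "1 \<le> i"
  then have "a div 2^i \<le> a div 2^1" using power_increasing[of 1 i "2::nat"] by (intro div_le_mono2) auto
  moreover have "a div 2 < N" using a_range by linarith
  ultimately show ?thesis by simp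
qed

lemma anc_iff: "h \<in> Anc \<longleftrightarrow> (\<exists>i\<le>L. h = a div 2^i)"
proof
  assume "h \<in> Anc"
  then obtain i where i: "1 \<le> h" "h = a div 2^i" unfolding Anc_def by auto
  have "i \<le> L"
  proof (rule ccontr)
    assume "\<not> i \<le> L" then have "a div 2^i = 0" using a_big by simp
    then show False using i by simp
  qed
  then show "\<exists>i\<le>L. h = a div 2^i" using i by blast
next
  assume "\<exists>i\<le>L. h = a div 2^i"
  then show "h \<in> Anc" unfolding Anc_def using anc_pos by blast
qed

lemma a_Anc: "a \<in> Anc" using anc_iff[of a] by (metis div_by_1 power_0 zero_le)
lemma one_Anc: "1 \<in> Anc" using anc_iff a_L by auto

lemma anc_div: "c \<in> Anc \<Longrightarrow> 2 \<le> c \<Longrightarrow> c div 2 \<in> Anc \<and> c < 2*N"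
proof -
  assume c: "c \<in> Anc" "2 \<le> c"
  then obtain i where i: "i \<le> L" "c = a div 2^i" using anc_iff by auto
  have "i \<noteq> L" using i c a_L by auto
  then have "c div 2 = a div 2^(Suc i)" "Suc i \<le> L" using i div2S[of a i] by auto
  moreover have "c \<le> a" using i by simp
  ultimately show ?thesis using anc_iff a_range by auto
qed

lemma anc_ge_N: "c \<in> Anc \<Longrightarrow> N \<le> c \<Longrightarrow> c = a"
proof -
  assume c: "c \<in> Anc" "N \<le> c"
  then obtain i where i: "i \<le> L" "c = a div 2^i" using anc_iff by auto
  show ?thesis
  proof (cases i)
    case 0 then show ?thesis using i by simp
  next
    case (Suc j) then show ?thesis using anc_lt[of i] i c by simp
  qed
qed

lemma sib_notin: "i < L \<Longrightarrow> sib (a div 2^i) \<notin> Anc"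
proof
  assume i: "i < L" and s: "sib (a div 2^i) \<in> Anc"
  let ?d = "a div 2^i"
  have d2: "2 \<le> ?d" using anc_ge2[OF i] .
  obtain m where m: "m \<le> L" "sib ?d = a div 2^m" using s anc_iff by auto
  have "a div 2^(Suc m) = sib ?d div 2" using m div2S[of a m] by simp
  also have "\<dots> = ?d div 2" using sib_div d2 by simp
  also have "\<dots> = a div 2^(Suc i)" using div2S[of a i] by simp
  finally have eq: "a div 2^(Suc m) = a div 2^(Suc i)" .
  have "1 \<le> a div 2^(Suc i)" unfolding div2S using d2 by simp
  then have h1: "1 \<le> a div 2^(Suc m)" using eq by (simp only:)
  have "Suc m = Suc i" by (rule div_pow_inj[OF eq h1])
  then show False using m sib_neq[of ?d] d2 by simp
qed

lemma F_sub_T: "F \<subseteq> T"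
proof
  fix e assume "e \<in> F"
  then obtain i where i: "i < L" "e = {(a div 2^i) div 2, sib (a div 2^i)}" unfolding F_def by auto
  let ?d = "a div 2^i"
  have d: "2 \<le> ?d" "?d < 2*N" using anc_ge2[OF i(1)] a_range
    by (auto intro: le_less_trans[OF div_le_dividend])
  have "2 \<le> sib ?d" "sib ?d < 2*N" using sib_range[OF d] by auto
  moreover have "e = {sib ?d div 2, sib ?d}" using i sib_div d by simp
  ultimately show "e \<in> T" unfolding T_def by blast
qed

lemma card_F: "card F \<le> L"
  unfolding F_def using card_image_le[of "{..<L}"] by auto

lemma F_char: "2 \<le> c \<Longrightarrow> c < 2*N \<Longrightarrow> c div 2 \<in> Anc \<Longrightarrow> c \<notin> Anc \<Longrightarrow> {c div 2, c} \<in> F"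
proof -
  assume c: "2 \<le> c" "c < 2*N" "c div 2 \<in> Anc" "c \<notin> Anc"
  then obtain j where j: "j \<le> L" "c div 2 = a div 2^j" using anc_iff by auto
  have "c div 2 < N" using c(2) by linarith
  then have "j \<noteq> 0" using j a_range by (metis div_by_1 power_0 not_less)
  then obtain i where i: "j = Suc i" by (cases j) auto
  let ?d = "a div 2^i"
  have "?d \<in> Anc" unfolding anc_iff using i j by (intro exI[of _ i]) auto
  then have "c \<noteq> ?d" using c by auto
  moreover have "c div 2 = ?d div 2" using j i div2S[of a i] by simp
  ultimately have "c = sib ?d" using sib_eq by blast
  then have "{c div 2, c} = {?d div 2, sib ?d}" using \<open>c div 2 = ?d div 2\<close> by simp
  then show ?thesis unfolding F_def using i j by auto
qed

lemma path_notF: "c \<in> Anc \<Longrightarrow> 2 \<le> c \<Longrightarrow> {c div 2, c} \<notin> F"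
proof
  assume c: "c \<in> Anc" "2 \<le> c" "{c div 2, c} \<in> F"
  then obtain i where i: "i < L" "{c div 2, c} = {(a div 2^i) div 2, sib (a div 2^i)}" unfolding F_def by auto
  let ?d = "a div 2^i"
  have d2: "2 \<le> ?d" using anc_ge2[OF i(1)] .
  from i(2) consider "c div 2 = ?d div 2 \<and> c = sib ?d" | "c div 2 = sib ?d \<and> c = ?d div 2"
    by (auto simp: doubleton_eq_iff)
  then show False
  proof cases
    case 1 then show ?thesis using sib_notin[OF i(1)] c by simp
  next
    case 2
    have "sib ?d \<ge> 2 * (sib ?d div 2)" by simp
    then have "sib ?d \<ge> 2 * c" using 2 sib_div d2 by simp
    moreover have "c div 2 < 2 * c" using c(2) by simp
    ultimately show ?thesis using 2 by simp
  qed
qed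

lemma reach_P: "(\<lambda>j. j = 2*k+1 \<or> (1 \<le> j \<and> reach j z)) (2*k+1)" by simp

lemma psi_bounds: "z \<noteq> x \<Longrightarrow> 1 \<le> psi z \<and> psi z \<le> 2*k+1"
proof -
  assume z: "z \<noteq> x"
  let ?P = "\<lambda>j. j = 2*k+1 \<or> (1 \<le> j \<and> reach j z)"
  have "?P (LEAST j. ?P j)" by (rule LeastI[of ?P "2*k+1"]) simp
  moreover have "(LEAST j. ?P j) \<le> 2*k+1" by (rule Least_le) simp
  ultimately show ?thesis using z unfolding psi_def by auto
qed

lemma psi_le: "z \<noteq> x \<Longrightarrow> 1 \<le> j \<Longrightarrow> reach j z \<Longrightarrow> psi z \<le> j"
  unfolding psi_def by (auto intro: Least_le)

lemma psi_lip: "{p,q} \<in> E0' \<Longrightarrow> psi q \<le> psi p + 1"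
proof -
  assume pq: "{p,q} \<in> E0'"
  show ?thesis
  proof (cases "q = x")
    case True then show ?thesis unfolding psi_def by simp
  next
    case qx: False
    show ?thesis
    proof (cases "p = x")
      case True
      have "reach 1 q" unfolding reach_def
        by (intro exI[of _ "[x,q]"]) (use pq True in \<open>auto simp: is_walk_def\<close>)
      then show ?thesis using psi_le[OF qx, of 1] by simp
    next
      case px: False
      let ?P = "\<lambda>j. j = 2*k+1 \<or> (1 \<le> j \<and> reach j p)"
      have pe: "psi p = (LEAST j. ?P j)" unfolding psi_def using px by simp
      have LP: "?P (psi p)" unfolding pe by (rule LeastI[of ?P "2*k+1"]) simp
      show ?thesis
      proof (cases "psi p = 2*k+1")
        case True then show ?thesis using psi_bounds[OF qx] by simp
      next
        case False
        with LP obtain r where r: "is_walk E0' r" "hd r = x" "last r = p" "length r = Suc (psi p)"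
          unfolding reach_def by auto
        have rne: "r \<noteq> []" using r(1) by (simp add: is_walk_def)
        have "reach (psi p + 1) q" unfolding reach_def
          apply (intro exI[of _ "r @ [q]"])
          using r rne walk_snoc[OF rne, of E0' q] pq by auto
        then show ?thesis using psi_le[OF qx, of "psi p + 1"] by simp
      qed
    qed
  qed
qed

lemma psi_y: "psi y = 2*k+1"
proof -
  have yx: "y \<noteq> x" using xy_facts by simp
  let ?P = "\<lambda>j. j = 2*k+1 \<or> (1 \<le> j \<and> reach j y)"
  have pe: "psi y = (LEAST j. ?P j)" unfolding psi_def using yx by simp
  have LP: "?P (psi y)" unfolding pe by (rule LeastI[of ?P "2*k+1"]) simp
  show ?thesis
  proof (rule ccontr)
    assume ne: "psi y \<noteq> 2*k+1"
    with LP obtain r where r: "is_walk E0' r" "hd r = x" "last r = y" "length r = Suc (psi y)"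
      unfolding reach_def by auto
    have "length r \<ge> 2*k+2" using no_short[OF gr gir xy] r unfolding E0'_def by blast
    then show False using r(4) psi_bounds[OF yx] ne by simp
  qed
qed

lemma phi_T: assumes c: "2 \<le> c" "c < 2*N" "{c div 2, c} \<notin> F"
  shows "\<bar>phi c - phi (c div 2)\<bar> \<le> w {c div 2, c}"
proof -
  have cN: "c div 2 < N" using c(2) by linarith
  have wc: "w {c div 2, c} = (if N \<le> c then real k else 0)" using w_T c by simp
  show ?thesis
  proof (cases "c \<in> Anc")
    case True
    then have p: "c div 2 \<in> Anc" using anc_div c by blast
    then have pp: "phi (c div 2) = 0" using cN unfolding phi_def by simp
    show ?thesis
    proof (cases "N \<le> c")
      case True
      then have "c = a" using anc_ge_N \<open>c \<in> Anc\<close> by blast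
      then have "phi c = real k" unfolding phi_def a_def psi_def by simp
      then show ?thesis using pp wc True by simp
    next
      case False
      then show ?thesis using pp wc \<open>c \<in> Anc\<close> unfolding phi_def by simp
    qed
  next
    case False
    then have p: "c div 2 \<notin> Anc" using F_char c by blast
    then have pp: "phi (c div 2) = real (2*k+1)" using cN unfolding phi_def by simp
    show ?thesis
    proof (cases "N \<le> c")
      case True
      have "c \<noteq> a" using False a_Anc by blast
      then have "c - N \<noteq> x" using True unfolding a_def by auto
      then have "1 \<le> psi (c - N)" "psi (c - N) \<le> 2*k+1" using psi_bounds by auto
      then show ?thesis using pp wc True unfolding phi_def by simp
    next
      case False
      then show ?thesis using pp wc \<open>c \<notin> Anc\<close> unfolding phi_def by simp
    qed
  qed
qed

lemma phi_lip: "\<forall>u v. {u,v} \<in> E - F - {{a,b}} \<longrightarrow> phi v - phi u \<le> w {u,v}"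
proof (intro allI impI)
  fix u v assume uv: "{u,v} \<in> E - F - {{a,b}}"
  show "phi v - phi u \<le> w {u,v}"
  proof (cases "{u,v} \<in> T")
    case True
    then obtain c where c: "{u,v} = {c div 2, c}" "2 \<le> c" "c < 2*N" unfolding T_def by auto
    have "\<bar>phi c - phi (c div 2)\<bar> \<le> w {c div 2, c}" using phi_T c uv by auto
    then show ?thesis using c(1) by (auto simp: doubleton_eq_iff insert_commute)
  next
    case False
    then have g: "{u,v} \<in> Gm" "{u,v} \<noteq> {a,b}" using uv unfolding E_def by auto
    then obtain p q where pq: "{u,v} = {N+p, N+q}" "{p,q} \<in> E0" using Gm_elem by blast
    have "{p,q} \<noteq> {x,y}" using pq g(2) unfolding a_def b_def by auto
    then have e: "{p,q} \<in> E0'" "{q,p} \<in> E0'" using pq unfolding E0'_def by (auto simp: insert_commute)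
    have "real (psi q) \<le> real (psi p) + 1" "real (psi p) \<le> real (psi q) + 1"
      using psi_lip[OF e(1)] psi_lip[OF e(2)] by auto
    moreover have "w {u,v} = 1" using g w_Gm by simp
    moreover have "w {N+q, N+p} = 1" using g(1) pq(1) w_Gm by (simp add: insert_commute)
    ultimately show ?thesis using pq(1) unfolding phi_def by (auto simp: doubleton_eq_iff)
  qed
qed

lemma lower: "is_walk (E - F - {{a,b}}) p \<Longrightarrow> hd p = 1 \<Longrightarrow> last p = b \<Longrightarrow> real (3*k+1) \<le> walk_weight w p"
proof -
  assume p: "is_walk (E - F - {{a,b}}) p" "hd p = 1" "last p = b"
  have "phi b - phi 1 \<le> walk_weight w p" using walk_pot[OF p(1) phi_lip] p by simp
  moreover have "phi b = real (3*k+1)" using a_range psi_y unfolding phi_def b_def by simp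
  moreover have "phi 1 = 0" using one_Anc N2 unfolding phi_def by simp
  ultimately show ?thesis by simp
qed

lemma path_walk: "m \<le> L \<Longrightarrow>
  is_walk (E - F) (map (\<lambda>i. a div 2^(L-i)) [0..<Suc m]) \<and>
  hd (map (\<lambda>i. a div 2^(L-i)) [0..<Suc m]) = 1 \<and>
  last (map (\<lambda>i. a div 2^(L-i)) [0..<Suc m]) = a div 2^(L-m) \<and>
  walk_weight w (map (\<lambda>i. a div 2^(L-i)) [0..<Suc m]) = (if m = L then real k else 0)"
proof (induction m)
  case 0 then show ?case using a_L L1 by (simp add: is_walk_def walk_weight_def)
next
  case (Suc m)
  let ?q = "map (\<lambda>i. a div 2^(L-i)) [0..<Suc m]"
  have IH: "is_walk (E - F) ?q" "hd ?q = 1" "last ?q = a div 2^(L-m)" "walk_weight w ?q = 0"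
    using Suc by auto
  have qne: "?q \<noteq> []" by simp
  have eq: "map (\<lambda>i. a div 2^(L-i)) [0..<Suc (Suc m)] = ?q @ [a div 2^(L - Suc m)]" by simp
  let ?c = "a div 2^(L - Suc m)"
  have cA: "?c \<in> Anc" unfolding anc_iff by (intro exI[of _ "L - Suc m"]) auto
  have c2: "2 \<le> ?c" using anc_ge2[of "L - Suc m"] Suc.prems by simp
  have c2N: "?c < 2*N" using a_range by (meson div_le_dividend le_less_trans)
  have pc: "?c div 2 = a div 2^(L-m)" using div2S[of a "L - Suc m"] Suc.prems
    by (simp add: Suc_diff_Suc)
  have edge: "{a div 2^(L-m), ?c} = {?c div 2, ?c}" using pc by simp
  have inT: "{?c div 2, ?c} \<in> T" unfolding T_def using c2 c2N by blast
  have nF: "{?c div 2, ?c} \<notin> F" using path_notF cA c2 by blast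
  have wE: "{last ?q, ?c} \<in> E - F" using IH(3) edge inT nF unfolding E_def by auto
  have wc: "w {last ?q, ?c} = (if Suc m = L then real k else 0)"
  proof -
    have "N \<le> ?c \<longleftrightarrow> L - Suc m = 0"
    proof
      assume "N \<le> ?c" then show "L - Suc m = 0" using anc_lt[of "L - Suc m"] by (cases "L - Suc m") auto
    next
      assume "L - Suc m = 0" then show "N \<le> ?c" using a_range by simp
    qed
    then show ?thesis using IH(3) edge w_T[OF c2 c2N] Suc.prems by auto
  qed
  have h: "hd (?q @ [?c]) = 1" using qne IH(2) by (metis hd_append2)
  have l: "last (?q @ [?c]) = a div 2^(L - Suc m)" by (simp only: last_snoc)
  have wk: "is_walk (E - F) (?q @ [?c])" using walk_snoc[OF qne] IH(1) wE by blast
  have ww: "walk_weight w (?q @ [?c]) = (if Suc m = L then real k else 0)"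
    by (simp only: weight_snoc[OF qne] IH(4) wc add_0_left)
  show ?case unfolding eq using h l wk ww by blast
qed

lemma upper: "dist (E - F) w 1 b \<le> ereal (real k + 1)"
proof -
  let ?q = "map (\<lambda>i. a div 2^(L-i)) [0..<Suc L]"
  have q: "is_walk (E - F) ?q" "hd ?q = 1" "last ?q = a" "walk_weight w ?q = real k"
    using path_walk[of L] by auto
  have qne: "?q \<noteq> []" by simp
  have abG: "{a,b} \<in> Gm" unfolding Gm_def a_def b_def by (rule image_eqI[OF _ xy]) simp
  have abF: "{a,b} \<notin> F"
  proof
    assume "{a,b} \<in> F"
    then have "{a,b} \<in> T" using F_sub_T by blast
    then obtain c where c: "{a,b} = {c div 2, c}" "2 \<le> c" "c < 2*N" unfolding T_def by blast
    then show False using T_notGm[OF c(2,3)] abG by simp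
  qed
  have W: "is_walk (E - F) (?q @ [b])" using walk_snoc[OF qne] q abG abF unfolding E_def by auto
  have WW: "walk_weight w (?q @ [b]) = real k + 1" using weight_snoc[OF qne] q w_Gm[OF abG] by simp
  have h1: "hd (?q @ [b]) = 1" using q(2) qne by (simp only: hd_append if_False)
  have h2: "last (?q @ [b]) = b" by (simp only: last_snoc)
  from dist_le[OF W h1 h2, of w] show ?thesis unfolding WW .
qed

lemma key:
  assumes H: "is_EFT_ASPT (2*N) E w 1 f \<sigma> H" and f: "real f \<ge> log 2 (real (2*N))"
    and s1: "1 \<le> \<sigma>" and s2: "\<sigma> < (3 * real k + 1) / (real k + 1)"
  shows "{a,b} \<in> H"
proof (rule ccontr)
  assume nab: "{a,b} \<notin> H"
  have r2: "real (2*N) = (2::real) ^ Suc L" unfolding N_def by simp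
  have "log 2 ((2::real) ^ Suc L) = real (Suc L)" by (rule log_pow_cancel) auto
  then have "log 2 (real (2*N)) = real (Suc L)" by (simp only: r2)
  then have fL: "L \<le> f" using f by simp
  have FE: "F \<subseteq> E" using F_sub_T unfolding E_def by auto
  have cF: "card F \<le> f" using card_F fL by simp
  have HE: "H \<subseteq> E" using H unfolding is_EFT_ASPT_def by simp
  have "dist (H - F) w 1 b \<le> ereal \<sigma> * dist (E - F) w 1 b"
    using H FE cF a_range unfolding is_EFT_ASPT_def by blast
  also have "\<dots> \<le> ereal \<sigma> * ereal (real k + 1)"
    using upper s1 by (intro ereal_mult_left_mono) auto
  finally have A: "dist (H - F) w 1 b \<le> ereal (\<sigma> * (real k + 1))" by simp
  have "ereal (real (3*k+1)) \<le> dist (H - F) w 1 b"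
  proof (rule dist_ge)
    fix p assume p: "is_walk (H - F) p" "hd p = 1" "last p = b"
    have "H - F \<subseteq> E - F - {{a,b}}" using HE nab by blast
    then have "is_walk (E - F - {{a,b}}) p" by (rule walk_mono[OF p(1)])
    then show "real (3*k+1) \<le> walk_weight w p" using lower p by simp
  qed
  with A have "real (3*k+1) \<le> \<sigma> * (real k + 1)" by (metis ereal_less_eq(3) order_trans)
  moreover have "\<sigma> * (real k + 1) < 3 * real k + 1" using s2 by (simp add: field_simps)
  ultimately show False by simp
qed

end

context constr begin

lemma Gm_sub:
  assumes H: "is_EFT_ASPT (2*N) E w 1 f \<sigma> H" and f: "real f \<ge> log 2 (real (2*N))"
    and s1: "1 \<le> \<sigma>" and s2: "\<sigma> < (3 * real k + 1) / (real k + 1)"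
  shows "Gm \<subseteq> H"
proof
  fix e assume "e \<in> Gm"
  then obtain p q where pq: "e = {N+p, N+q}" "{p,q} \<in> E0" using Gm_elem by blast
  interpret c2: constr2 k \<eta> L E0 p q by unfold_locales (use pq in auto)
  have "{c2.a, c2.b} \<in> H" using c2.key[OF H f s1 s2] .
  then show "e \<in> H" using pq unfolding c2.a_def c2.b_def by simp
qed

end




lemma pow_bracket: "1 \<le> (\<eta>::nat) \<Longrightarrow> \<exists>L. \<eta> \<le> 2^L \<and> 2^L < 2*\<eta>"
proof (induction \<eta>)
  case 0 then show ?case by simp
next
  case (Suc n)
  show ?case
  proof (cases "n = 0")
    case True then show ?thesis by (intro exI[of _ 0]) simp
  next
    case False
    then obtain L where L: "n \<le> 2^L" "2^L < 2*n" using Suc.IH by auto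
    show ?thesis
    proof (cases "Suc n \<le> 2^L")
      case True then show ?thesis using L by (intro exI[of _ L]) simp
    next
      case False
      then have "n = 2^L" using L by simp
      then show ?thesis using \<open>n \<noteq> 0\<close> by (intro exI[of _ "Suc L"]) simp
    qed
  qed
qed

theorem mainTheorem8:
  assumes girth_conj:
    "\<forall>k::nat. k \<ge> 1 \<longrightarrow> (\<exists>c::real. c > 0 \<and>
       infinite {\<eta>::nat. \<exists>E. is_graph \<eta> E \<and> girth E = enat (2 * k + 2) \<and>
                    real (card E) \<ge> c * real \<eta> powr (1 + 1 / real k)})"
  shows
    "\<forall>k::nat. k \<ge> 1 \<longrightarrow> (\<exists>c::real. c > 0 \<and>
       infinite {n::nat. \<exists>E w s. is_graph n E \<and> (\<forall>e \<in> E. w e \<ge> 0) \<and> s < n \<and>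
          (\<forall>(f::nat) (\<sigma>::real) H.
             real f \<ge> log 2 (real n) \<and> 1 \<le> \<sigma> \<and> \<sigma> < (3 * real k + 1) / (real k + 1) \<and>
             is_EFT_ASPT n E w s f \<sigma> H
             \<longrightarrow> real (card H) \<ge> c * real n powr (1 + 1 / real k))})"
proof (intro allI impI)
  fix k :: nat assume k1: "k \<ge> 1"
  obtain c where c: "c > 0" and inf: "infinite {\<eta>::nat. \<exists>E. is_graph \<eta> E \<and> girth E = enat (2 * k + 2) \<and>
                    real (card E) \<ge> c * real \<eta> powr (1 + 1 / real k)}"
    using girth_conj k1 by blast
  define p where "p = 1 + 1 / real k"
  have p12: "1 \<le> p" "p \<le> 2" using k1 unfolding p_def by (auto simp: field_simps)
  show "\<exists>c::real. c > 0 \<and>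
       infinite {n::nat. \<exists>E w s. is_graph n E \<and> (\<forall>e \<in> E. w e \<ge> 0) \<and> s < n \<and>
          (\<forall>(f::nat) (\<sigma>::real) H.
             real f \<ge> log 2 (real n) \<and> 1 \<le> \<sigma> \<and> \<sigma> < (3 * real k + 1) / (real k + 1) \<and>
             is_EFT_ASPT n E w s f \<sigma> H
             \<longrightarrow> real (card H) \<ge> c * real n powr (1 + 1 / real k))}"
  proof (intro exI[of _ "c/16"] conjI)
    show "c/16 > 0" using c by simp
    show "infinite {n::nat. \<exists>E w s. is_graph n E \<and> (\<forall>e \<in> E. w e \<ge> 0) \<and> s < n \<and>
          (\<forall>(f::nat) (\<sigma>::real) H.
             real f \<ge> log 2 (real n) \<and> 1 \<le> \<sigma> \<and> \<sigma> < (3 * real k + 1) / (real k + 1) \<and>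
             is_EFT_ASPT n E w s f \<sigma> H
             \<longrightarrow> real (card H) \<ge> c/16 * real n powr (1 + 1 / real k))}"
      unfolding infinite_nat_iff_unbounded_le
    proof
      fix m
      from inf obtain \<eta> where eta: "\<eta> \<ge> m + 2" and "\<eta> \<in> {\<eta>::nat. \<exists>E. is_graph \<eta> E \<and> girth E = enat (2 * k + 2) \<and>
                    real (card E) \<ge> c * real \<eta> powr (1 + 1 / real k)}"
        unfolding infinite_nat_iff_unbounded_le by blast
      then obtain E0 where E0: "is_graph \<eta> E0" "girth E0 = enat (2*k+2)" "real (card E0) \<ge> c * real \<eta> powr p"
        unfolding p_def by blast
      have "c * real \<eta> powr p > 0" using c eta by simp
      then have "card E0 > 0" using E0(3) by linarith
      then obtain e0 where "e0 \<in> E0" by (metis card.empty ex_in_conv less_irrefl)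
      with E0(1) obtain x y where xy: "{x,y} \<in> E0" unfolding is_graph_def by blast
      obtain L where L: "\<eta> \<le> 2^L" "2^L < 2*\<eta>" using pow_bracket[of \<eta>] eta by auto
      have L1: "L \<ge> 1"
      proof (rule ccontr)
        assume "\<not> L \<ge> 1" then have "L = 0" by simp
        then show False using L eta by simp
      qed
      interpret constr k \<eta> L E0 by unfold_locales (use k1 E0 L L1 in auto)
      have bound: "\<forall>(f::nat) (\<sigma>::real) H.
             real f \<ge> log 2 (real (2*N)) \<and> 1 \<le> \<sigma> \<and> \<sigma> < (3 * real k + 1) / (real k + 1) \<and>
             is_EFT_ASPT (2*N) E w 1 f \<sigma> H
             \<longrightarrow> real (card H) \<ge> c/16 * real (2*N) powr (1 + 1 / real k)"
      proof (intro allI impI)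
        fix f \<sigma> H
        assume A: "real f \<ge> log 2 (real (2*N)) \<and> 1 \<le> \<sigma> \<and> \<sigma> < (3 * real k + 1) / (real k + 1) \<and>
             is_EFT_ASPT (2*N) E w 1 f \<sigma> H"
        have GH: "Gm \<subseteq> H" using Gm_sub A by blast
        have HE: "H \<subseteq> E" using A unfolding is_EFT_ASPT_def by blast
        have "card Gm \<le> card H" using GH HE finE by (meson card_mono finite_subset)
        then have cH: "real (card E0) \<le> real (card H)" using card_Gm by simp
        have n4': "2*N \<le> 4*\<eta>" using L unfolding N_def by simp
        have n4: "real (2*N) \<le> 4 * real \<eta>" using of_nat_mono[OF n4', where 'a=real] by simp
        have "real (2*N) powr p \<le> (4 * real \<eta>) powr p"
          using n4 p12 by (intro powr_mono2) auto
        also have "\<dots> = 4 powr p * real \<eta> powr p" using powr_mult[of 4 "real \<eta>" p] by simp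
        also have "\<dots> \<le> 16 * real \<eta> powr p"
        proof (rule mult_right_mono)
          have "(4::real) powr p \<le> 4 powr 2" using p12 by (intro powr_mono) auto
          then show "(4::real) powr p \<le> 16" by simp
        qed simp
        finally have "c/16 * real (2*N) powr p \<le> c/16 * (16 * real \<eta> powr p)"
          using c by (intro mult_left_mono) auto
        then have "c/16 * real (2*N) powr p \<le> c * real \<eta> powr p" by simp
        then show "real (card H) \<ge> c/16 * real (2*N) powr (1 + 1 / real k)"
          using cH E0(3) unfolding p_def by linarith
      qed
      have wpos: "\<forall>e \<in> E. w e \<ge> 0" unfolding w_def by auto
      show "\<exists>n\<ge>m. n \<in> {n::nat. \<exists>E w s. is_graph n E \<and> (\<forall>e \<in> E. w e \<ge> 0) \<and> s < n \<and>
          (\<forall>(f::nat) (\<sigma>::real) H.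
             real f \<ge> log 2 (real n) \<and> 1 \<le> \<sigma> \<and> \<sigma> < (3 * real k + 1) / (real k + 1) \<and>
             is_EFT_ASPT n E w s f \<sigma> H
             \<longrightarrow> real (card H) \<ge> c/16 * real n powr (1 + 1 / real k))}"
      proof (intro exI[of _ "2*N"] conjI)
        show "m \<le> 2*N" using L eta unfolding N_def by simp
        have "(1::nat) < 2*N" using N2 by simp
        then show "2*N \<in> {n::nat. \<exists>E w s. is_graph n E \<and> (\<forall>e \<in> E. w e \<ge> 0) \<and> s < n \<and>
          (\<forall>(f::nat) (\<sigma>::real) H.
             real f \<ge> log 2 (real n) \<and> 1 \<le> \<sigma> \<and> \<sigma> < (3 * real k + 1) / (real k + 1) \<and>
             is_EFT_ASPT n E w s f \<sigma> H
             \<longrightarrow> real (card H) \<ge> c/16 * real n powr (1 + 1 / real k))}"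
          using graph wpos bound by blast
      qed
    qed
  qed
qed


end
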